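(* Consider the BSPR network with $K$ relays. For every nonempty $\mathcal M=\{m_1,\dots,m_M\}\subseteq\{1,\dots,K\}$, with $M=|\mathcal M|$, $p_{\max}=\max_{m\in\mathcal M}p_m$ and $q_{\max}=1-p_{\max}$, coded transmission with forwarding relays achieves every rate $R<R_\textnormal{coded,f}$, where $R_\textnormal{coded,f}=I(U;Y_1,\dots,Y_K)$ (with $U$ uniform) satisfies \[ R_\textnormal{coded,f}\ge 1+Mp_{\max}\log p_{\max}+Mq_{\max}\log q_{\max}-\sum_{l=0}^{M-1}\binom{M-1}{l}\left(q_{\max}^lp_{\max}^{M-l}+q_{\max}^{M-l}p_{\max}^l\right)\log\left(q_{\max}^lp_{\max}^{M-l}+q_{\max}^{M-l}p_{\max}^l\right). \]
   Context: Logarithms are base 2, with $0\log0=0$. BSPR network with $K$ relays: at each network use the source sends $U\in\{0,1\}$; relay $i$ receives $V_i=U\oplus Z_i$, $\Pr\{Z_i=1\}=p_{s,i}\in[0,1/2]$; relay $i$ sends $X_i$ and the destination receives $Y_i=X_i\oplus E_i$, $\Pr\{E_i=1\}=p_{i,d}\in[0,1/2]$; all noises mutually independent, i.i.d. over time. Codes: message $W$ uniform on $\{0,\dots,M'-1\}$; source encoder on $W$; relay $i$'s transmission at time $t$ depends only on its past received symbols; destination decodes from all its received symbols; $R$ is achievable if for every $\epsilon>0$ there are codes of rate at least $R$ with arbitrarily large length and average error probability at most $\epsilon$. A forwarding relay sets $X_i[t]=V_i[t-1]$ ($X_i[1]=0$), so the destination effectively receives $Y_i=U\oplus N_i$ with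 $N_i=Z_i\oplus E_i$ and $\Pr\{N_i=1\}=p_i:=p_{s,i}(1-p_{i,d})+(1-p_{s,i})p_{i,d}$. Coded transmission with forwarding relays: all relays forward and the source uses a channel code for the effective point-to-point channel from $U$ to $(Y_1,\dots,Y_K)$, the destination decoding from $(Y_1,\dots,Y_K)$. *)

theory Defs
  imports "HOL-Analysis.Analysis" "HOL-Library.FuncSet"
begin

definition xlogx :: "real \<Rightarrow> real" where
  "xlogx x = (if x = 0 then 0 else x * log 2 x)"

text \<open>End-to-end crossover probability of relay i with forwarding.\<close>
definition eff_p :: "(nat \<Rightarrow> real) \<Rightarrow> (nat \<Rightarrow> real) \<Rightarrow> nat \<Rightarrow> real" where
  "eff_p ps pd i = ps i * (1 - pd i) + (1 - ps i) * pd i"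

text \<open>Output alphabet of the effective channel: (Y_1,...,Y_K), relays indexed 1..K.\<close>
definition outs :: "nat \<Rightarrow> (nat \<Rightarrow> bool) set" where
  "outs K = {1..K} \<rightarrow>\<^sub>E (UNIV :: bool set)"

text \<open>Transition probability W(y|u) of the effective channel U -> (Y_1,...,Y_K),
  Y_i = U xor N_i with Pr{N_i = 1} = p i, independent.\<close>
definition chan :: "nat \<Rightarrow> (nat \<Rightarrow> real) \<Rightarrow> bool \<Rightarrow> (nat \<Rightarrow> bool) \<Rightarrow> real" where
  "chan K p u y = (\<Prod>i\<in>{1..K}. if y i = u then 1 - p i else p i)"

definition mutual_info_unif :: "nat \<Rightarrow> (nat \<Rightarrow> real) \<Rightarrow> real" where
  "mutual_info_unif K p =
     (\<Sum>u\<in>(UNIV::bool set). \<Sum>y\<in>outs K.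
        (if chan K p u y = 0 then 0
         else (1/2) * chan K p u y *
              log 2 (chan K p u y / ((chan K p False y + chan K p True y) / 2))))"

text \<open>Memoryless extension: blocklength n, codeword x indexed by times 0..n-1,
  output block y t = (Y_1[t],...,Y_K[t]).\<close>
definition chan_n :: "nat \<Rightarrow> (nat \<Rightarrow> real) \<Rightarrow> nat \<Rightarrow> (nat \<Rightarrow> bool) \<Rightarrow> (nat \<Rightarrow> nat \<Rightarrow> bool) \<Rightarrow> real" where
  "chan_n K p n x y = (\<Prod>t<n. chan K p (x t) (y t))"

definition outs_n :: "nat \<Rightarrow> nat \<Rightarrow> (nat \<Rightarrow> nat \<Rightarrow> bool) set" where
  "outs_n K n = {..<n} \<rightarrow>\<^sub>E outs K"

definition avg_err :: "nat \<Rightarrow> (nat \<Rightarrow> real) \<Rightarrow> nat \<Rightarrow> nat \<Rightarrow> (nat \<Rightarrow> nat \<Rightarrow> bool)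
      \<Rightarrow> ((nat \<Rightarrow> nat \<Rightarrow> bool) \<Rightarrow> nat) \<Rightarrow> real" where
  "avg_err K p n Mp enc dec =
     (1 / real Mp) * (\<Sum>w<Mp. \<Sum>y\<in>outs_n K n.
        (if dec y \<noteq> w then chan_n K p n (enc w) y else 0))"

definition achievable_fwd :: "nat \<Rightarrow> (nat \<Rightarrow> real) \<Rightarrow> real \<Rightarrow> bool" where
  "achievable_fwd K p R \<longleftrightarrow>
     (\<forall>\<epsilon>>0. \<forall>N. \<exists>n\<ge>N. \<exists>Mp enc dec. n > 0 \<and> Mp \<ge> 1 \<and>
        log 2 (real Mp) / real n \<ge> R \<and> avg_err K p n Mp enc dec \<le> \<epsilon>)"

end

theory Submission
  imports Defs
begin


definition Lf :: "real \<Rightarrow> real \<Rightarrow> real" where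
  "Lf a m = (if a = 0 then 0 else a * log 2 (a/m))"

lemma ln_ge_1m: "0 < x \<Longrightarrow> 1 - 1/x \<le> ln (x::real)"
proof -
  assume x: "0 < x"
  have "ln (1/x) \<le> 1/x - 1" using x by (intro ln_le_minus_one) simp
  thus ?thesis using x by (simp add: ln_div)
qed

lemma Lf_sub_pos:
  fixes a a' m m' :: real
  assumes "a > 0" "a' > 0" "m > 0" "m' > 0"
  shows "Lf (a+a') (m+m') \<le> Lf a m + Lf a' m'"
proof -
  define A where "A = a + a'"
  define M where "M = m + m'"
  have AM: "A > 0" "M > 0" using assms by (auto simp: A_def M_def)
  have 1: "a * ln (a/m) - a * ln (A/M) \<ge> a - m * A / M"
  proof -
    have "a * ln (a/m) - a * ln (A/M) = a * ln ((a*M)/(m*A))"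
      using assms AM by (simp add: ln_div ln_mult algebra_simps)
    also have "\<dots> \<ge> a * (1 - 1/((a*M)/(m*A)))"
      using assms AM by (intro mult_left_mono ln_ge_1m) auto
    also have "a * (1 - 1/((a*M)/(m*A))) = a - m * A / M"
      using assms AM by (simp add: field_simps)
    finally show ?thesis .
  qed
  have 2: "a' * ln (a'/m') - a' * ln (A/M) \<ge> a' - m' * A / M"
  proof -
    have "a' * ln (a'/m') - a' * ln (A/M) = a' * ln ((a'*M)/(m'*A))"
      using assms AM by (simp add: ln_div ln_mult algebra_simps)
    also have "\<dots> \<ge> a' * (1 - 1/((a'*M)/(m'*A)))"
      using assms AM by (intro mult_left_mono ln_ge_1m) auto
    also have "a' * (1 - 1/((a'*M)/(m'*A))) = a' - m' * A / M"
      using assms AM by (simp add: field_simps)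
    finally show ?thesis .
  qed
  have 3: "a - m * A / M + (a' - m' * A / M) = 0"
    using AM by (simp add: A_def M_def field_simps)
  have "A * ln (A/M) \<le> a * ln (a/m) + a' * ln (a'/m')"
  proof -
    have "A * ln (A/M) = a * ln (A/M) + a' * ln (A/M)" by (simp add: A_def distrib_right)
    thus ?thesis using 1 2 3 by linarith
  qed
  hence "A * ln (A/M) / ln 2 \<le> (a * ln (a/m) + a' * ln (a'/m')) / ln 2"
    by (intro divide_right_mono) auto
  thus ?thesis using assms AM unfolding Lf_def log_def A_def M_def
    by (simp add: add_divide_distrib)
qed

lemma Lf_sub:
  fixes a a' m m' :: real
  assumes "a \<ge> 0" "a' \<ge> 0" "m \<ge> 0" "m' \<ge> 0" "a > 0 \<Longrightarrow> m > 0" "a' > 0 \<Longrightarrow> m' > 0"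
  shows "Lf (a+a') (m+m') \<le> Lf a m + Lf a' m'"
proof (cases "a = 0")
  case True
  show ?thesis
  proof (cases "a' = 0")
    case False
    then have "a' > 0" "m' > 0" using assms by auto
    have "log 2 (a'/(m+m')) \<le> log 2 (a'/m')"
      using assms \<open>a'>0\<close> \<open>m'>0\<close> by (subst log_le_cancel_iff) (auto intro: divide_left_mono)
    then show ?thesis using True False \<open>a'>0\<close> by (simp add: Lf_def)
  qed (simp add: Lf_def True)
next
  case False
  then have "a > 0" "m > 0" using assms by auto
  show ?thesis
  proof (cases "a' = 0")
    case True
    have "log 2 (a/(m+m')) \<le> log 2 (a/m)"
      using assms \<open>a>0\<close> \<open>m>0\<close> by (subst log_le_cancel_iff) (auto intro: divide_left_mono)
    then show ?thesis using True False \<open>a>0\<close> by (simp add: Lf_def mult_left_mono)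
  next
    case False
    then show ?thesis using assms \<open>a>0\<close> \<open>m>0\<close> by (intro Lf_sub_pos) auto
  qed
qed

lemma Lf_hom: "t \<ge> 0 \<Longrightarrow> Lf (t*a) (t*m) = t * Lf a m"
  by (cases "t = 0") (auto simp: Lf_def)

definition phi :: "real \<Rightarrow> real \<Rightarrow> real" where
  "phi a b = (Lf a ((a+b)/2) + Lf b ((a+b)/2)) / 2"

lemma phi_hom: "t \<ge> 0 \<Longrightarrow> phi (t*a) (t*b) = t * phi a b"
  using Lf_hom[of t a "(a+b)/2"] Lf_hom[of t b "(a+b)/2"]
  by (simp add: phi_def algebra_simps)

lemma half_add_le: "(x1::real) \<le> a1 + b1 \<Longrightarrow> x2 \<le> a2 + b2 \<Longrightarrow> (x1 + x2)/2 \<le> (a1+a2)/2 + (b1+b2)/2"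
  by argo

lemma phi_sub:
  assumes "a \<ge> 0" "b \<ge> 0" "a' \<ge> 0" "b' \<ge> 0"
  shows "phi (a+a') (b+b') \<le> phi a b + phi a' b'"
proof -
  have e: "(a + a' + (b + b')) / 2 = (a+b)/2 + (a'+b')/2" by (simp add: field_simps)
  have "Lf (a+a') ((a+b)/2 + (a'+b')/2) \<le> Lf a ((a+b)/2) + Lf a' ((a'+b')/2)"
    using assms by (intro Lf_sub) auto
  moreover have "Lf (b+b') ((a+b)/2 + (a'+b')/2) \<le> Lf b ((a+b)/2) + Lf b' ((a'+b')/2)"
    using assms by (intro Lf_sub) auto
  ultimately show ?thesis unfolding phi_def e by (rule half_add_le)
qed

lemma phi_sum:
  assumes "finite S" "\<And>x. x \<in> S \<Longrightarrow> f x \<ge> 0" "\<And>x. x \<in> S \<Longrightarrow> g x \<ge> 0"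
  shows "phi (\<Sum>x\<in>S. f x) (\<Sum>x\<in>S. g x) \<le> (\<Sum>x\<in>S. phi (f x) (g x))"
  using assms
proof (induction S rule: finite_induct)
  case empty
  then show ?case by (simp add: phi_def Lf_def)
next
  case (insert x S)
  have "phi (\<Sum>x\<in>insert x S. f x) (\<Sum>x\<in>insert x S. g x) = phi (f x + sum f S) (g x + sum g S)"
    using insert by simp
  also have "\<dots> \<le> phi (f x) (g x) + phi (sum f S) (sum g S)"
    using insert by (intro phi_sub sum_nonneg) auto
  also have "\<dots> \<le> phi (f x) (g x) + (\<Sum>x\<in>S. phi (f x) (g x))"
    using insert by auto
  finally show ?case using insert by simp
qed



definition mi :: "(bool \<Rightarrow> 'y \<Rightarrow> real) \<Rightarrow> 'y set \<Rightarrow> real" where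
  "mi W Y = (\<Sum>u\<in>(UNIV::bool set). \<Sum>y\<in>Y.
        (if W u y = 0 then 0
         else (1/2) * W u y * log 2 (W u y / ((W False y + W True y) / 2))))"

lemma mutual_info_mi: "mutual_info_unif K p = mi (chan K p) (outs K)"
  unfolding mutual_info_unif_def mi_def ..

lemma mi_phi: "mi W Y = (\<Sum>y\<in>Y. phi (W False y) (W True y))"
proof -
  have "mi W Y = (\<Sum>y\<in>Y. \<Sum>u\<in>(UNIV::bool set).
        (if W u y = 0 then 0
         else (1/2) * W u y * log 2 (W u y / ((W False y + W True y) / 2))))"
    unfolding mi_def by (rule sum.swap)
  also have "\<dots> = (\<Sum>y\<in>Y. phi (W False y) (W True y))"
    by (intro sum.cong refl) (simp add: UNIV_bool phi_def Lf_def)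
  finally show ?thesis .
qed

lemma dpi:
  assumes fY: "finite Y" and fZ: "finite Z"
    and Wa: "\<And>u y. y \<in> Y \<Longrightarrow> Wa u y \<ge> 0"
    and T0: "\<And>y z. y \<in> Y \<Longrightarrow> z \<in> Z \<Longrightarrow> T y z \<ge> 0"
    and T1: "\<And>y. y \<in> Y \<Longrightarrow> (\<Sum>z\<in>Z. T y z) = 1"
    and Wb: "\<And>u z. z \<in> Z \<Longrightarrow> Wb u z = (\<Sum>y\<in>Y. T y z * Wa u y)"
  shows "mi Wb Z \<le> mi Wa Y"
proof -
  have "mi Wb Z = (\<Sum>z\<in>Z. phi (\<Sum>y\<in>Y. T y z * Wa False y) (\<Sum>y\<in>Y. T y z * Wa True y))"
    unfolding mi_phi using Wb by (intro sum.cong) auto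
  also have "\<dots> \<le> (\<Sum>z\<in>Z. \<Sum>y\<in>Y. phi (T y z * Wa False y) (T y z * Wa True y))"
    using Wa T0 fY by (intro sum_mono phi_sum) auto
  also have "\<dots> = (\<Sum>z\<in>Z. \<Sum>y\<in>Y. T y z * phi (Wa False y) (Wa True y))"
    using T0 by (intro sum.cong refl phi_hom) auto
  also have "\<dots> = (\<Sum>y\<in>Y. (\<Sum>z\<in>Z. T y z) * phi (Wa False y) (Wa True y))"
    by (subst sum.swap) (simp add: sum_distrib_right)
  also have "\<dots> = mi Wa Y"
    unfolding mi_phi using T1 by simp
  finally show ?thesis .
qed



lemma finite_outs: "finite (outs K)"
  unfolding outs_def by (intro finite_PiE) auto

lemma eff_p_range:
  fixes a b :: real
  assumes "0 \<le> a" "a \<le> 1/2" "0 \<le> b" "b \<le> 1/2"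
  shows "0 \<le> a * (1 - b) + (1 - a) * b \<and> a * (1 - b) + (1 - a) * b \<le> 1/2"
proof -
  have "a * (1 - b) + (1 - a) * b = 1/2 - 2 * (1/2 - a) * (1/2 - b)" by (simp add: algebra_simps)
  moreover have "(1/2 - a) * (1/2 - b) \<ge> 0" using assms by simp
  moreover have "(1/2 - a) * (1/2 - b) \<le> 1/4"
  proof -
    have "(1/2 - a) * (1/2 - b) \<le> (1/2) * (1/2)" using assms by (intro mult_mono) auto
    thus ?thesis by simp
  qed
  ultimately show ?thesis by linarith
qed

lemma chan_nonneg:
  assumes "\<forall>i\<in>{1..K}. 0 \<le> p i \<and> p i \<le> 1"
  shows "chan K p u y \<ge> 0"
  unfolding chan_def using assms by (intro prod_nonneg) auto

lemma chan_sum: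
  "(\<Sum>y\<in>outs K. chan K p u y) = 1"
proof -
  have "(\<Sum>y\<in>outs K. chan K p u y) =
     (\<Sum>y\<in>PiE {1..K} (\<lambda>_. UNIV). \<Prod>i\<in>{1..K}. (\<lambda>i b. if b = u then 1 - p i else p i) i (y i))"
    unfolding outs_def chan_def by simp
  also have "\<dots> = (\<Prod>i\<in>{1..K}. \<Sum>b\<in>UNIV. (\<lambda>i b. if b = u then 1 - p i else p i) i b)"
    by (rule prod_sum_PiE[symmetric]) auto
  also have "\<dots> = 1" by (cases u) (simp_all add: UNIV_bool)
  finally show ?thesis .
qed

definition Tm :: "nat \<Rightarrow> (nat \<Rightarrow> real) \<Rightarrow> (nat \<Rightarrow> bool) \<Rightarrow> (nat \<Rightarrow> bool) \<Rightarrow> real" where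
  "Tm K r y z = (\<Prod>i\<in>{1..K}. if z i = y i then 1 - r i else r i)"

lemma Tm_sum: "y \<in> outs K \<Longrightarrow> (\<Sum>z\<in>outs K. Tm K r y z) = 1"
proof -
  assume "y \<in> outs K"
  have "(\<Sum>z\<in>outs K. Tm K r y z) =
     (\<Sum>z\<in>PiE {1..K} (\<lambda>_. UNIV). \<Prod>i\<in>{1..K}. (\<lambda>i b. if b = y i then 1 - r i else r i) i (z i))"
    unfolding outs_def Tm_def by simp
  also have "\<dots> = (\<Prod>i\<in>{1..K}. \<Sum>b\<in>UNIV. (\<lambda>i b. if b = y i then 1 - r i else r i) i b)"
    by (rule prod_sum_PiE[symmetric]) auto
  also have "\<dots> = 1" by (intro prod.neutral ballI) (simp add: UNIV_bool)
  finally show ?thesis .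
qed

lemma chan_compose:
  assumes r: "\<forall>i\<in>{1..K}. p' i = p i + r i - 2 * p i * r i"
  shows "chan K p' u z = (\<Sum>y\<in>outs K. Tm K r y z * chan K p u y)"
proof -
  have "(\<Sum>y\<in>outs K. Tm K r y z * chan K p u y) =
     (\<Sum>y\<in>PiE {1..K} (\<lambda>_. UNIV). \<Prod>i\<in>{1..K}.
        (\<lambda>i b. (if z i = b then 1 - r i else r i) * (if b = u then 1 - p i else p i)) i (y i))"
    unfolding outs_def Tm_def chan_def by (simp add: prod.distrib)
  also have "\<dots> = (\<Prod>i\<in>{1..K}. \<Sum>b\<in>UNIV.
       (\<lambda>i b. (if z i = b then 1 - r i else r i) * (if b = u then 1 - p i else p i)) i b)"
    by (rule prod_sum_PiE[symmetric]) auto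
  also have "\<dots> = chan K p' u z"
    unfolding chan_def
  proof (intro prod.cong refl)
    fix i assume i: "i \<in> {1..K}"
    show "(\<Sum>b\<in>UNIV. (if z i = b then 1 - r i else r i) * (if b = u then 1 - p i else p i)) =
          (if z i = u then 1 - p' i else p' i)"
      using r i by (cases u; cases "z i") (auto simp: UNIV_bool algebra_simps)
  qed
  finally show ?thesis ..
qed

lemma degrade:
  assumes "\<forall>i\<in>{1..K}. 0 \<le> p i \<and> p i \<le> p' i \<and> p' i \<le> 1/2"
  shows "mi (chan K p') (outs K) \<le> mi (chan K p) (outs K)"
proof -
  define r where "r i = (if p i = 1/2 then 0 else (p' i - p i) / (1 - 2 * p i))" for i
  have r1: "\<forall>i\<in>{1..K}. p' i = p i + r i - 2 * p i * r i"
  proof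
    fix i assume i: "i \<in> {1..K}"
    show "p' i = p i + r i - 2 * p i * r i"
    proof (cases "p i = 1/2")
      case True
      have "p i \<le> p' i" "p' i \<le> 1/2" using assms i by auto
      then show ?thesis using True by (simp add: r_def)
    next
      case False
      then have "1 - 2 * p i \<noteq> 0" by simp
      then have "r i * (1 - 2 * p i) = p' i - p i" using False by (simp add: r_def)
      then have "r i - 2 * p i * r i = p' i - p i" by (simp add: algebra_simps)
      then show ?thesis by linarith
    qed
  qed
  have r2: "\<forall>i\<in>{1..K}. 0 \<le> r i \<and> r i \<le> 1"
  proof
    fix i assume i: "i \<in> {1..K}"
    show "0 \<le> r i \<and> r i \<le> 1"
    proof (cases "p i = 1/2")
      case False
      have "p i \<le> p' i" "p' i \<le> 1/2" "0 \<le> p i" using assms i by auto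
      then have pos: "1 - 2 * p i > 0" using False by auto
      have "p' i - p i \<le> 1 - 2 * p i" using \<open>p i \<le> p' i\<close> \<open>p' i \<le> 1/2\<close> by linarith
      then show ?thesis using False pos \<open>p i \<le> p' i\<close> by (auto simp: r_def divide_le_eq)
    qed (simp add: r_def)
  qed
  show ?thesis
  proof (rule dpi[OF finite_outs finite_outs, where T="Tm K r" and Wa="chan K p" and Wb="chan K p'"])
    show "\<And>u y. y \<in> outs K \<Longrightarrow> 0 \<le> chan K p u y"
      using assms by (intro chan_nonneg) auto
    show "\<And>y z. y \<in> outs K \<Longrightarrow> z \<in> outs K \<Longrightarrow> 0 \<le> Tm K r y z"
      unfolding Tm_def using r2 by (intro prod_nonneg) auto
    show "\<And>y. y \<in> outs K \<Longrightarrow> (\<Sum>z\<in>outs K. Tm K r y z) = 1" by (rule Tm_sum)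
    show "\<And>u z. z \<in> outs K \<Longrightarrow> chan K p' u z = (\<Sum>y\<in>outs K. Tm K r y z * chan K p u y)"
      using r1 by (rule chan_compose)
  qed
qed



lemma sum_PiE_bool_Pow:
  assumes "finite A"
  shows "(\<Sum>z\<in>PiE A (\<lambda>_. UNIV :: bool set). H {i\<in>A. z i}) = (\<Sum>S\<in>Pow A. H S)"
  by (rule sum.reindex_bij_witness[of _ "\<lambda>S i. if i \<in> A then i \<in> S else undefined" "\<lambda>z. {i\<in>A. z i}"])
     (auto simp: PiE_def extensional_def)

lemma sum_Pow_split:
  fixes H :: "'a set \<Rightarrow> real"
  assumes "finite A" "M \<subseteq> A"
  shows "(\<Sum>S\<in>Pow A. H (S \<inter> M)) = 2 ^ card (A - M) * (\<Sum>T\<in>Pow M. H T)"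
proof -
  have fM: "finite M" using assms finite_subset by auto
  have "(\<Sum>S\<in>Pow A. H (S \<inter> M)) = (\<Sum>(T,U)\<in>Pow M \<times> Pow (A - M). H T)"
    using assms
    by (intro sum.reindex_bij_witness[of _ "\<lambda>(T,U). T \<union> U" "\<lambda>S. (S \<inter> M, S - M)"]) auto
  also have "\<dots> = (\<Sum>T\<in>Pow M. \<Sum>U\<in>Pow (A - M). H T)"
    by (rule sum.cartesian_product[symmetric])
  also have "\<dots> = (\<Sum>T\<in>Pow M. 2 ^ card (A - M) * H T)"
    using assms by (simp add: card_Pow)
  finally show ?thesis by (simp add: sum_distrib_left)
qed

lemma sum_Pow_card:
  assumes "finite M"
  shows "(\<Sum>T\<in>Pow M. (G (card T) :: real)) = (\<Sum>k\<le>card M. real (card M choose k) * G k)"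
proof -
  have "(\<Sum>T\<in>Pow M. G (card T)) = (\<Sum>k\<in>{..card M}. \<Sum>T\<in>{T. T \<in> Pow M \<and> card T = k}. G (card T))"
    using assms by (intro sum.group[symmetric]) (auto intro: card_mono)
  also have "\<dots> = (\<Sum>k\<le>card M. real (card M choose k) * G k)"
  proof (intro sum.cong refl)
    fix k
    have "(\<Sum>T\<in>{T. T \<in> Pow M \<and> card T = k}. G (card T)) = (\<Sum>T\<in>{T. T \<subseteq> M \<and> card T = k}. G k)"
      by (intro sum.cong) auto
    also have "\<dots> = real (card M choose k) * G k"
      using n_subsets[OF assms, of k] by simp
    finally show "(\<Sum>T\<in>{T. T \<in> Pow M \<and> card T = k}. G (card T)) = real (card M choose k) * G k" .
  qed
  finally show ?thesis .
qed

lemma count_outs: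
  assumes "M \<subseteq> {1..K}"
  shows "(\<Sum>z\<in>outs K. (G (card {i\<in>M. z i}) :: real)) =
         2 ^ (K - card M) * (\<Sum>k\<le>card M. real (card M choose k) * G k)"
proof -
  have fM: "finite M" using assms finite_subset by auto
  have "(\<Sum>z\<in>outs K. G (card {i\<in>M. z i})) =
        (\<Sum>z\<in>PiE {1..K} (\<lambda>_. UNIV :: bool set). (\<lambda>S. G (card (S \<inter> M))) {i\<in>{1..K}. z i})"
    unfolding outs_def using assms by (intro sum.cong refl arg_cong[where f=G] arg_cong[where f=card]) auto
  also have "\<dots> = (\<Sum>S\<in>Pow {1..K}. G (card (S \<inter> M)))"
    by (rule sum_PiE_bool_Pow) simp
  also have "\<dots> = 2 ^ card ({1..K} - M) * (\<Sum>T\<in>Pow M. G (card T))"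
    using sum_Pow_split[OF _ assms, of "\<lambda>T. G (card T)"] by simp
  also have "card ({1..K} - M) = K - card M"
    using assms fM by (simp add: card_Diff_subset)
  also have "(\<Sum>T\<in>Pow M. G (card T)) = (\<Sum>k\<le>card M. real (card M choose k) * G k)"
    by (rule sum_Pow_card[OF fM])
  finally show ?thesis .
qed



lemma binom_mean:
  fixes x y :: real
  shows "(\<Sum>k\<le>m. real (m choose k) * (real k * x^(k-1)) * y^(m-k)) = real m * (x+y)^(m-1)"
proof (cases m)
  case 0 then show ?thesis by simp
next
  case (Suc n)
  have "(\<Sum>k\<le>Suc n. real (Suc n choose k) * (real k * x^(k-1)) * y^(Suc n-k)) =
        (\<Sum>k\<le>n. real (Suc n choose Suc k) * (real (Suc k) * x^k) * y^(n-k))"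
    by (subst sum.atMost_Suc_shift) simp
  also have "\<dots> = (\<Sum>k\<le>n. real (Suc n) * (real (n choose k) * x^k * y^(n-k)))"
  proof (intro sum.cong refl)
    fix k
    have "real (Suc n choose Suc k) * real (Suc k) = real (Suc n) * real (n choose k)"
      using Suc_times_binomial[of k n] by (metis of_nat_mult mult.commute)
    then show "real (Suc n choose Suc k) * (real (Suc k) * x^k) * y^(n-k) =
          real (Suc n) * (real (n choose k) * x^k * y^(n-k))"
      by (metis (no_types, lifting) mult.assoc mult.left_commute)
  qed
  also have "\<dots> = real (Suc n) * (x+y)^n"
    by (simp add: binomial_ring sum_distrib_left)
  finally show ?thesis using Suc by simp
qed

lemma sum_reflect: "(\<Sum>k\<le>m. f k) = (\<Sum>k\<le>(m::nat). f (m - k))"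
  by (rule sum.reindex_bij_witness[of _ "\<lambda>k. m - k" "\<lambda>k. m - k"]) auto

lemma xlogx_mult: "a \<ge> 0 \<Longrightarrow> b \<ge> 0 \<Longrightarrow> xlogx (a*b) = a * xlogx b + b * xlogx a"
  by (cases "a = 0"; cases "b = 0") (auto simp: xlogx_def log_mult algebra_simps)

lemma xlogx_power: "x \<ge> 0 \<Longrightarrow> xlogx (x^j) = real j * x^(j-1) * xlogx x"
proof (cases "x = 0")
  case True then show ?thesis by (cases j) (auto simp: xlogx_def)
next
  case False
  assume "x \<ge> 0"
  then have x: "x > 0" using False by simp
  show ?thesis
  proof (cases j)
    case 0 then show ?thesis by (simp add: xlogx_def)
  next
    case (Suc i)
    have e1: "xlogx (x^j) = x^j * log 2 (x^j)" using x by (simp add: xlogx_def)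
    have e2: "log 2 (x^j) = real j * log 2 x" using x by (intro log_nat_power) simp
    have e3: "x^j = x^(j-1) * x" using Suc by simp
    have e4: "xlogx x = x * log 2 x" using x by (simp add: xlogx_def)
    have "xlogx (x^j) = x^j * (real j * log 2 x)" by (simp only: e1 e2)
    also have "\<dots> = x^(j-1) * x * (real j * log 2 x)" by (simp only: e3)
    also have "\<dots> = real j * x^(j-1) * xlogx x" by (simp only: e4 mult_ac)
    finally show ?thesis .
  qed
qed

lemma sum_xlogx_binom:
  fixes x y :: real
  assumes "x \<ge> 0" "y \<ge> 0"
  shows "(\<Sum>k\<le>m. real (m choose k) * xlogx (x^k * y^(m-k))) = real m * (x+y)^(m-1) * (xlogx x + xlogx y)"
proof -
  have t: "real (m choose k) * xlogx (x^k * y^(m-k)) =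
      real (m choose k) * (real k * x^(k-1)) * y^(m-k) * xlogx x +
      real (m choose k) * x^k * (real (m-k) * y^(m-k-1)) * xlogx y" for k
  proof -
    have "xlogx (x^k * y^(m-k)) = x^k * (real (m-k) * y^(m-k-1) * xlogx y) + y^(m-k) * (real k * x^(k-1) * xlogx x)"
      using assms by (simp only: xlogx_mult zero_le_power xlogx_power)
    then show ?thesis by (simp only: ring_distribs mult_ac add.commute)
  qed
  have "(\<Sum>k\<le>m. real (m choose k) * xlogx (x^k * y^(m-k))) =
        (\<Sum>k\<le>m. real (m choose k) * (real k * x^(k-1)) * y^(m-k)) * xlogx x +
        (\<Sum>k\<le>m. real (m choose k) * x^k * (real (m-k) * y^(m-k-1))) * xlogx y"
    by (simp only: t sum.distrib sum_distrib_right)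
  also have "(\<Sum>k\<le>m. real (m choose k) * x^k * (real (m-k) * y^(m-k-1))) =
             (\<Sum>k\<le>m. real (m choose (m-k)) * x^(m-k) * (real (m-(m-k)) * y^(m-(m-k)-1)))"
    by (rule sum_reflect)
  also have "\<dots> = (\<Sum>k\<le>m. real (m choose k) * (real k * y^(k-1)) * x^(m-k))"
    by (intro sum.cong refl) (auto simp: binomial_symmetric[symmetric])
  also have "\<dots> = real m * (y+x)^(m-1)" by (rule binom_mean)
  finally show ?thesis using binom_mean[of m x y] by (simp add: algebra_simps)
qed

lemma pascal_sym:
  fixes h :: "nat \<Rightarrow> real"
  assumes sym: "\<And>k. k \<le> Suc n \<Longrightarrow> h (Suc n - k) = h k"
  shows "(\<Sum>k\<le>Suc n. real (Suc n choose k) * h k) = 2 * (\<Sum>k\<le>n. real (n choose k) * h k)"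
proof -
  have "(\<Sum>k\<le>Suc n. real (Suc n choose k) * h k) =
        (\<Sum>k\<le>n. real (n choose k) * h (Suc k)) + (h 0 + (\<Sum>k\<le>n. real (n choose Suc k) * h (Suc k)))"
    by (subst sum.atMost_Suc_shift) (simp add: sum.distrib algebra_simps)
  also have "h 0 + (\<Sum>k\<le>n. real (n choose Suc k) * h (Suc k)) = (\<Sum>k\<le>Suc n. real (n choose k) * h k)"
    by (subst sum.atMost_Suc_shift[of _ n]) simp
  also have "\<dots> = (\<Sum>k\<le>n. real (n choose k) * h k)" by simp
  also have "(\<Sum>k\<le>n. real (n choose k) * h (Suc k)) = (\<Sum>k\<le>n. real (n choose (n-k)) * h (Suc (n-k)))"
    by (rule sum_reflect)
  also have "\<dots> = (\<Sum>k\<le>n. real (n choose k) * h k)"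
  proof (intro sum.cong refl)
    fix k assume k: "k \<in> {..n}"
    have "h (Suc (n-k)) = h (Suc n - k)" using k by (simp add: Suc_diff_le)
    also have "\<dots> = h k" using k sym by simp
    finally show "real (n choose (n-k)) * h (Suc (n-k)) = real (n choose k) * h k"
      using k by (simp add: binomial_symmetric[symmetric])
  qed
  finally show ?thesis by simp
qed

lemma phi_xlogx:
  assumes "a \<ge> 0" "b \<ge> 0"
  shows "phi a b = (xlogx a + xlogx b - xlogx (a+b) + a + b) / 2"
proof (cases "a + b = 0")
  case True
  then have "a = 0" "b = 0" using assms by auto
  then show ?thesis by (simp add: phi_def Lf_def xlogx_def)
next
  case False
  then have s: "a + b > 0" using assms by simp
  have L: "Lf c ((a+b)/2) = xlogx c - c * log 2 ((a+b)/2)" if "c \<ge> 0" for c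
  proof (cases "c = 0")
    case True then show ?thesis by (simp add: Lf_def xlogx_def)
  next
    case False
    then have "c > 0" using that by simp
    then have "log 2 (c / ((a+b)/2)) = log 2 c - log 2 ((a+b)/2)" using s by (intro log_divide_pos) auto
    then show ?thesis using False unfolding Lf_def xlogx_def by (simp add: right_diff_distrib)
  qed
  have l: "log 2 (a+b) = log 2 ((a+b)/2) + 1" using s by (simp add: log_divide)
  have "xlogx (a+b) = (a+b) * log 2 (a+b)" using s by (simp add: xlogx_def)
  also have "\<dots> = (a+b) * (log 2 ((a+b)/2) + 1)" by (simp only: l)
  finally have "a * log 2 ((a+b)/2) + b * log 2 ((a+b)/2) = xlogx (a+b) - (a+b)"
    by (simp add: algebra_simps)
  moreover have "Lf a ((a+b)/2) = xlogx a - a * log 2 ((a+b)/2)" using L assms by simp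
  moreover have "Lf b ((a+b)/2) = xlogx b - b * log 2 ((a+b)/2)" using L assms by simp
  ultimately show ?thesis unfolding phi_def by argo
qed



lemma card_filter_not: "finite M \<Longrightarrow> card {i\<in>M. \<not> P i} = card M - card {i\<in>M. P i}"
proof -
  assume f: "finite M"
  have "{i\<in>M. \<not> P i} = M - {i\<in>M. P i}" by auto
  then show ?thesis using f by (simp add: card_Diff_subset)
qed

lemma chan_pprime:
  assumes M: "M \<subseteq> {1..K}"
  shows "chan K (\<lambda>i. if i \<in> M then pm else 1/2) u z =
         (1/2)^(K - card M) * (if u then (1-pm)^card {i\<in>M. z i} * pm^(card M - card {i\<in>M. z i})
                               else pm^card {i\<in>M. z i} * (1-pm)^(card M - card {i\<in>M. z i}))"
proof -
  have fM: "finite M" using M finite_subset by auto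
  define f where "f i = (if z i = u then 1 - (if i \<in> M then pm else 1/2) else (if i \<in> M then pm else (1/2::real)))" for i
  have "chan K (\<lambda>i. if i \<in> M then pm else 1/2) u z = prod f {1..K}"
    unfolding chan_def f_def ..
  also have "\<dots> = prod f ({1..K} - M) * prod f M"
    using M by (intro prod.subset_diff) auto
  also have "prod f ({1..K} - M) = (1/2)^(K - card M)"
  proof -
    have "prod f ({1..K} - M) = (\<Prod>i\<in>{1..K} - M. 1/2)" by (intro prod.cong refl) (auto simp: f_def)
    also have "\<dots> = (1/2)^(K - card M)" using M fM by (simp add: card_Diff_subset)
    finally show ?thesis .
  qed
  also have "prod f M = (\<Prod>i\<in>M. if z i = u then 1 - pm else pm)"
    by (intro prod.cong refl) (auto simp: f_def)
  also have "\<dots> = (1-pm)^card {i\<in>M. z i = u} * pm^card {i\<in>M. z i \<noteq> u}"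
    using fM by (simp add: prod.If_cases Int_def)
  also have "\<dots> = (if u then (1-pm)^card {i\<in>M. z i} * pm^(card M - card {i\<in>M. z i})
                               else pm^card {i\<in>M. z i} * (1-pm)^(card M - card {i\<in>M. z i}))"
  proof (cases u)
    case True
    then show ?thesis using card_filter_not[OF fM, of z] by simp
  next
    case False
    then show ?thesis using card_filter_not[OF fM, of z] by (simp add: mult.commute)
  qed
  finally show ?thesis .
qed

lemma sum5: "(\<Sum>k\<in>A. (a k + b k - c k + d k + e k)/2) =
  ((\<Sum>k\<in>A. a k) + (\<Sum>k\<in>A. b k) - (\<Sum>k\<in>A. c k) + (\<Sum>k\<in>A. d k) + (\<Sum>k\<in>A. e k))/(2::real)"
  by (simp only: sum_divide_distrib[symmetric] sum.distrib sum_subtractf)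

lemma mi_pprime:
  assumes M: "M \<subseteq> {1..K}" and m: "card M = Suc n" and pm: "0 \<le> pm" "pm \<le> 1"
  shows "mi (chan K (\<lambda>i. if i \<in> M then pm else 1/2)) (outs K) =
     1 + real (Suc n) * xlogx pm + real (Suc n) * xlogx (1-pm)
       - (\<Sum>l=0..n. real (n choose l) *
                 xlogx ((1-pm)^l * pm^(Suc n-l) + (1-pm)^(Suc n-l) * pm^l))"
proof -
  define q where "q = 1 - pm"
  have q: "q \<ge> 0" "pm + q = 1" "q + pm = 1" using pm by (auto simp: q_def)
  define c :: real where "c = (1/2)^(K - Suc n)"
  have c: "c \<ge> 0" "c * 2^(K - Suc n) = 1" by (auto simp: c_def power_mult_distrib[symmetric])
  define F where "F k = phi (pm^k * q^(Suc n - k)) (q^k * pm^(Suc n - k))" for k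
  have "mi (chan K (\<lambda>i. if i \<in> M then pm else 1/2)) (outs K) =
        (\<Sum>z\<in>outs K. c * F (card {i\<in>M. z i}))"
    unfolding mi_phi
  proof (intro sum.cong refl)
    fix z assume "z \<in> outs K"
    show "phi (chan K (\<lambda>i. if i \<in> M then pm else 1 / 2) False z) (chan K (\<lambda>i. if i \<in> M then pm else 1 / 2) True z) =
          c * F (card {i \<in> M. z i})"
      unfolding chan_pprime[OF M] F_def c_def m q_def using q pm
      by (simp only: if_True if_False) (rule phi_hom; simp)
  qed
  also have "\<dots> = 2^(K - Suc n) * (\<Sum>k\<le>Suc n. real (Suc n choose k) * (c * F k))"
    using count_outs[OF M, of "\<lambda>k. c * F k"] m by simp
  also have "(\<Sum>k\<le>Suc n. real (Suc n choose k) * (c * F k)) = c * (\<Sum>k\<le>Suc n. real (Suc n choose k) * F k)"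
    unfolding sum_distrib_left by (intro sum.cong refl) (simp only: mult.left_commute)
  also have "2^(K - Suc n) * (c * (\<Sum>k\<le>Suc n. real (Suc n choose k) * F k)) = c * 2^(K - Suc n) * (\<Sum>k\<le>Suc n. real (Suc n choose k) * F k)"
    by (simp only: mult_ac)
  also have "\<dots> = (\<Sum>k\<le>Suc n. real (Suc n choose k) * F k)" using c by simp
  also have "\<dots> = (\<Sum>k\<le>Suc n. (real (Suc n choose k) * xlogx (pm^k * q^(Suc n - k)) +
                   real (Suc n choose k) * xlogx (q^k * pm^(Suc n - k)) -
                   real (Suc n choose k) * xlogx (pm^k * q^(Suc n - k) + q^k * pm^(Suc n - k)) +
                   real (Suc n choose k) * (pm^k * q^(Suc n - k)) +
                   real (Suc n choose k) * (q^k * pm^(Suc n - k))) / 2)"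
    unfolding F_def using q pm by (intro sum.cong refl) (simp add: phi_xlogx algebra_simps)
  also have "\<dots> = ((\<Sum>k\<le>Suc n. real (Suc n choose k) * xlogx (pm^k * q^(Suc n - k))) +
                   (\<Sum>k\<le>Suc n. real (Suc n choose k) * xlogx (q^k * pm^(Suc n - k))) -
                   (\<Sum>k\<le>Suc n. real (Suc n choose k) * xlogx (pm^k * q^(Suc n - k) + q^k * pm^(Suc n - k))) +
                   (\<Sum>k\<le>Suc n. real (Suc n choose k) * (pm^k * q^(Suc n - k))) +
                   (\<Sum>k\<le>Suc n. real (Suc n choose k) * (q^k * pm^(Suc n - k)))) / 2"
    by (rule sum5)
  also have "(\<Sum>k\<le>Suc n. real (Suc n choose k) * xlogx (pm^k * q^(Suc n - k))) = real (Suc n) * (xlogx pm + xlogx q)"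
    using sum_xlogx_binom[of pm q "Suc n"] q pm by simp
  also have "(\<Sum>k\<le>Suc n. real (Suc n choose k) * xlogx (q^k * pm^(Suc n - k))) = real (Suc n) * (xlogx q + xlogx pm)"
    using sum_xlogx_binom[of q pm "Suc n"] q pm by simp
  also have "(\<Sum>k\<le>Suc n. real (Suc n choose k) * (pm^k * q^(Suc n - k))) = 1"
    using binomial_ring[of pm q "Suc n"] q by (simp add: mult_ac)
  also have "(\<Sum>k\<le>Suc n. real (Suc n choose k) * (q^k * pm^(Suc n - k))) = 1"
    using binomial_ring[of q pm "Suc n"] q by (simp add: mult_ac)
  also have "(\<Sum>k\<le>Suc n. real (Suc n choose k) * xlogx (pm^k * q^(Suc n - k) + q^k * pm^(Suc n - k))) =
             2 * (\<Sum>k\<le>n. real (n choose k) * xlogx (pm^k * q^(Suc n - k) + q^k * pm^(Suc n - k)))"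
    by (rule pascal_sym) (simp add: add.commute mult.commute)
  also have "(\<Sum>k\<le>n. real (n choose k) * xlogx (pm^k * q^(Suc n - k) + q^k * pm^(Suc n - k))) =
             (\<Sum>l=0..n. real (n choose l) * xlogx ((1-pm)^l * pm^(Suc n-l) + (1-pm)^(Suc n-l) * pm^l))"
    unfolding q_def atMost_atLeast0 by (intro sum.cong refl) (simp add: algebra_simps)
  finally show ?thesis unfolding q_def by (simp add: algebra_simps)
qed



lemma sum_PiE_split:
  assumes "w \<in> A"
  shows "(\<Sum>c\<in>PiE A (\<lambda>_. X). H c) = (\<Sum>(x,c)\<in>X \<times> PiE (A - {w}) (\<lambda>_. X). H (c(w := x)))"
  using assms
  by (intro sum.reindex_bij_witness[of _ "\<lambda>(x,g). g(w := x)" "\<lambda>g. (g w, g(w := undefined))"])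
     (auto simp: PiE_def extensional_def Pi_def)

lemma sum_PiE_one:
  assumes "finite A" "finite X" "w \<in> A"
  shows "(\<Sum>c\<in>PiE A (\<lambda>_. X). (F (c w) :: real)) = (\<Sum>x\<in>X. F x) * real (card X) ^ (card A - 1)"
proof -
  have "(\<Sum>c\<in>PiE A (\<lambda>_. X). F (c w)) = (\<Sum>(x,c)\<in>X \<times> PiE (A - {w}) (\<lambda>_. X). F x)"
    using sum_PiE_split[OF assms(3), where X=X and H="\<lambda>c. F (c w)"] by simp
  also have "\<dots> = (\<Sum>x\<in>X. \<Sum>c\<in>PiE (A - {w}) (\<lambda>_. X). F x)"
    by (rule sum.cartesian_product[symmetric])
  also have "\<dots> = (\<Sum>x\<in>X. F x * real (card X) ^ (card A - 1))"
    using assms by (simp add: card_PiE mult.commute)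
  finally show ?thesis by (simp add: sum_distrib_right)
qed

lemma sum_PiE_two:
  assumes "finite A" "finite X" "w \<in> A" "w' \<in> A" "w \<noteq> w'"
  shows "(\<Sum>c\<in>PiE A (\<lambda>_. X). (F (c w) * H (c w') :: real)) =
         (\<Sum>x\<in>X. F x) * (\<Sum>x\<in>X. H x) * real (card X) ^ (card A - 2)"
proof -
  have w': "w' \<in> A - {w}" using assms by auto
  have "(\<Sum>c\<in>PiE A (\<lambda>_. X). F (c w) * H (c w')) = (\<Sum>(x,c)\<in>X \<times> PiE (A - {w}) (\<lambda>_. X). F x * H (c w'))"
    using sum_PiE_split[OF assms(3), where X=X and H="\<lambda>c. F (c w) * H (c w')"] assms by simp
  also have "\<dots> = (\<Sum>x\<in>X. \<Sum>c\<in>PiE (A - {w}) (\<lambda>_. X). F x * H (c w'))"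
    by (rule sum.cartesian_product[symmetric])
  also have "\<dots> = (\<Sum>x\<in>X. F x * ((\<Sum>x\<in>X. H x) * real (card X) ^ (card (A - {w}) - 1)))"
    using sum_PiE_one[of "A - {w}" X w' H] assms w' by (simp add: sum_distrib_left[symmetric])
  also have "card (A - {w}) - 1 = card A - 2" using assms by simp
  finally show ?thesis by (simp add: sum_distrib_right mult_ac)
qed

lemma exists_le_avg:
  assumes "finite S" "S \<noteq> {}" "(\<Sum>c\<in>S. f c) \<le> real (card S) * b"
  shows "\<exists>c\<in>S. (f c :: real) \<le> b"
proof (rule ccontr)
  assume "\<not> ?thesis"
  then have "\<forall>c\<in>S. b < f c" by auto
  then have "(\<Sum>c\<in>S. b) < (\<Sum>c\<in>S. f c)" using assms by (intro sum_strict_mono) auto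
  then show False using assms by simp
qed

definition decf :: "nat \<Rightarrow> ('x \<Rightarrow> 'y \<Rightarrow> bool) \<Rightarrow> (nat \<Rightarrow> 'x) \<Rightarrow> 'y \<Rightarrow> nat" where
  "decf Mp G c y = (if \<exists>w<Mp. G (c w) y then LEAST w. w < Mp \<and> G (c w) y else 0)"

lemma err_pointwise:
  fixes V :: "'x \<Rightarrow> 'y \<Rightarrow> real"
  assumes V: "\<And>y. y \<in> Y \<Longrightarrow> V (c w) y \<ge> 0" and fY: "finite Y" and w: "w < Mp"
  shows "(\<Sum>y\<in>Y. if decf Mp G c y \<noteq> w then V (c w) y else 0) \<le>
         (\<Sum>y\<in>Y. if G (c w) y then 0 else V (c w) y) +
         (\<Sum>w'\<in>{..<Mp} - {w}. \<Sum>y\<in>Y. if G (c w') y then V (c w) y else 0)"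
proof -
  have "(\<Sum>y\<in>Y. if decf Mp G c y \<noteq> w then V (c w) y else 0) \<le>
        (\<Sum>y\<in>Y. (if G (c w) y then 0 else V (c w) y) +
                 (\<Sum>w'\<in>{..<Mp} - {w}. if G (c w') y then V (c w) y else 0))"
  proof (rule sum_mono)
    fix y assume y: "y \<in> Y"
    have nn: "(\<Sum>w'\<in>{..<Mp} - {w}. if G (c w') y then V (c w) y else 0) \<ge> 0"
      using V[OF y] by (intro sum_nonneg) auto
    show "(if decf Mp G c y \<noteq> w then V (c w) y else 0) \<le>
          (if G (c w) y then 0 else V (c w) y) +
                 (\<Sum>w'\<in>{..<Mp} - {w}. if G (c w') y then V (c w) y else 0)"
    proof (cases "decf Mp G c y \<noteq> w \<and> G (c w) y")
      case True
      then have ex: "\<exists>w<Mp. G (c w) y" using w by auto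
      define w0 where "w0 = (LEAST w. w < Mp \<and> G (c w) y)"
      have w0: "w0 < Mp \<and> G (c w0) y" unfolding w0_def using ex by (rule LeastI_ex)
      have "w0 \<noteq> w" using True ex by (simp add: decf_def w0_def)
      then have "w0 \<in> {..<Mp} - {w}" using w0 by auto
      then have "(if G (c w0) y then V (c w) y else 0) \<le>
                 (\<Sum>w'\<in>{..<Mp} - {w}. if G (c w') y then V (c w) y else 0)"
        using V[OF y] by (intro member_le_sum) auto
      then show ?thesis using w0 True by simp
    next
      case False
      then show ?thesis using nn V[OF y] by auto
    qed
  qed
  also have "\<dots> = (\<Sum>y\<in>Y. if G (c w) y then 0 else V (c w) y) +
         (\<Sum>w'\<in>{..<Mp} - {w}. \<Sum>y\<in>Y. if G (c w') y then V (c w) y else 0)"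
  proof -
    have "(\<Sum>y\<in>Y. \<Sum>w'\<in>{..<Mp} - {w}. if G (c w') y then V (c w) y else 0) =
          (\<Sum>w'\<in>{..<Mp} - {w}. \<Sum>y\<in>Y. if G (c w') y then V (c w) y else 0)"
      by (rule sum.swap)
    then show ?thesis by (simp add: sum.distrib)
  qed
  finally show ?thesis .
qed

lemma random_coding:
  fixes X :: "'x set" and Y :: "'y set" and V :: "'x \<Rightarrow> 'y \<Rightarrow> real"
  assumes fX: "finite X" and neX: "X \<noteq> {}" and fY: "finite Y"
    and V: "\<And>x y. x \<in> X \<Longrightarrow> y \<in> Y \<Longrightarrow> V x y \<ge> 0" and Mp: "Mp \<ge> 1"
  shows "\<exists>c\<in>PiE {..<Mp} (\<lambda>_. X).
    (1 / real Mp) * (\<Sum>w<Mp. \<Sum>y\<in>Y. if decf Mp G c y \<noteq> w then V (c w) y else 0) \<le>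
      (1 / real (card X)) * (\<Sum>x\<in>X. \<Sum>y\<in>Y. if G x y then 0 else V x y) +
      real Mp * ((1 / real (card X)^2) * (\<Sum>y\<in>Y. (\<Sum>x\<in>X. V x y) * (\<Sum>x\<in>X. if G x y then 1 else 0)))"
proof -
  define Cs where "Cs = PiE {..<Mp} (\<lambda>_. X)"
  define N where "N = real (card X)"
  have N: "N > 0" using fX neX by (simp add: N_def card_gt_0_iff)
  define A where "A = (\<Sum>x\<in>X. \<Sum>y\<in>Y. if G x y then 0 else V x y)"
  define B where "B = (\<Sum>y\<in>Y. (\<Sum>x\<in>X. V x y) * (\<Sum>x\<in>X. if G x y then 1 else (0::real)))"
  have fCs: "finite Cs" unfolding Cs_def using fX by (intro finite_PiE) auto
  have cardCs: "real (card Cs) = N ^ Mp" unfolding Cs_def N_def using fX by (simp add: card_PiE)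
  have neCs: "Cs \<noteq> {}" unfolding Cs_def using neX by (simp add: PiE_eq_empty_iff)
  define err where "err c = (\<Sum>w<Mp. \<Sum>y\<in>Y. if decf Mp G c y \<noteq> w then V (c w) y else 0)" for c
  have B0: "B \<ge> 0" unfolding B_def using V by (intro sum_nonneg mult_nonneg_nonneg) auto
  have sumA: "(\<Sum>c\<in>Cs. \<Sum>y\<in>Y. if G (c w) y then 0 else V (c w) y) = A * N ^ (Mp - 1)" if "w < Mp" for w
    unfolding Cs_def A_def N_def
    using sum_PiE_one[of "{..<Mp}" X w "\<lambda>x. \<Sum>y\<in>Y. if G x y then 0 else V x y"] that fX by simp
  have sumB: "(\<Sum>c\<in>Cs. \<Sum>y\<in>Y. if G (c w') y then V (c w) y else 0) = B * N ^ (Mp - 2)"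
    if "w < Mp" "w' < Mp" "w \<noteq> w'" for w w'
  proof -
    have "(\<Sum>c\<in>Cs. \<Sum>y\<in>Y. if G (c w') y then V (c w) y else 0) =
          (\<Sum>y\<in>Y. \<Sum>c\<in>Cs. V (c w) y * (if G (c w') y then 1 else 0))"
      by (subst sum.swap) (intro sum.cong refl, simp)
    also have "\<dots> = (\<Sum>y\<in>Y. (\<Sum>x\<in>X. V x y) * (\<Sum>x\<in>X. if G x y then 1 else 0) * N ^ (Mp - 2))"
      unfolding Cs_def N_def
      using sum_PiE_two[of "{..<Mp}" X w w' "\<lambda>x. V x y" "\<lambda>x. if G x y then 1 else 0" for y] that fX
      by simp
    also have "\<dots> = B * N ^ (Mp - 2)"
      unfolding B_def by (simp add: sum_distrib_right)
    finally show ?thesis .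
  qed
  have "(\<Sum>c\<in>Cs. err c) \<le> (\<Sum>c\<in>Cs. \<Sum>w<Mp. (\<Sum>y\<in>Y. if G (c w) y then 0 else V (c w) y) +
         (\<Sum>w'\<in>{..<Mp} - {w}. \<Sum>y\<in>Y. if G (c w') y then V (c w) y else 0))"
    unfolding err_def
  proof (intro sum_mono)
    fix c w assume c: "c \<in> Cs" and w: "w \<in> {..<Mp}"
    have "c w \<in> X" using c w unfolding Cs_def by auto
    then show "(\<Sum>y\<in>Y. if decf Mp G c y \<noteq> w then V (c w) y else 0) \<le>
         (\<Sum>y\<in>Y. if G (c w) y then 0 else V (c w) y) +
         (\<Sum>w'\<in>{..<Mp} - {w}. \<Sum>y\<in>Y. if G (c w') y then V (c w) y else 0)"
      using w by (intro err_pointwise fY V) auto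
  qed
  also have "\<dots> = (\<Sum>w<Mp. A * N ^ (Mp - 1) + (\<Sum>w'\<in>{..<Mp} - {w}. B * N ^ (Mp - 2)))"
  proof -
    have "(\<Sum>c\<in>Cs. \<Sum>w<Mp. (\<Sum>y\<in>Y. if G (c w) y then 0 else V (c w) y) +
         (\<Sum>w'\<in>{..<Mp} - {w}. \<Sum>y\<in>Y. if G (c w') y then V (c w) y else 0)) =
          (\<Sum>w<Mp. \<Sum>c\<in>Cs. (\<Sum>y\<in>Y. if G (c w) y then 0 else V (c w) y) +
         (\<Sum>w'\<in>{..<Mp} - {w}. \<Sum>y\<in>Y. if G (c w') y then V (c w) y else 0))"
      by (rule sum.swap)
    also have "\<dots> = (\<Sum>w<Mp. (\<Sum>c\<in>Cs. \<Sum>y\<in>Y. if G (c w) y then 0 else V (c w) y) +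
         (\<Sum>w'\<in>{..<Mp} - {w}. \<Sum>c\<in>Cs. \<Sum>y\<in>Y. if G (c w') y then V (c w) y else 0))"
      by (intro sum.cong refl) (simp only: sum.distrib, rule arg_cong2[where f="(+)"], rule refl, rule sum.swap)
    also have "\<dots> = (\<Sum>w<Mp. A * N ^ (Mp - 1) + (\<Sum>w'\<in>{..<Mp} - {w}. B * N ^ (Mp - 2)))"
      by (intro sum.cong refl) (simp add: sumA sumB)
    finally show ?thesis .
  qed
  also have "\<dots> = real Mp * (A * N ^ (Mp - 1) + real (Mp - 1) * B * N ^ (Mp - 2))"
    using Mp by (simp add: of_nat_diff)
  also have "\<dots> \<le> real Mp * (N ^ Mp * (A / N + real Mp * (B / N^2)))"
  proof -
    have a: "A * N ^ (Mp - 1) = N ^ Mp * (A / N)"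
      using N Mp by (cases Mp) (auto simp: field_simps)
    have b: "real (Mp - 1) * B * N ^ (Mp - 2) \<le> N ^ Mp * (real Mp * (B / N^2))"
    proof (cases "Mp \<ge> 2")
      case True
      have e: "Mp - 2 + 2 = Mp" using True by simp
      have "N ^ Mp = N^(Mp - 2 + 2)" by (simp only: e)
      also have "\<dots> = N^(Mp - 2) * N^2" by (rule power_add)
      finally have "N ^ Mp = N^(Mp - 2) * N^2" .
      then have "N ^ Mp * (real Mp * (B / N^2)) = real Mp * B * N^(Mp-2)" using N by simp
      moreover have "real (Mp - 1) * B * N ^ (Mp - 2) \<le> real Mp * B * N ^ (Mp - 2)"
        using B0 N by (intro mult_right_mono) auto
      ultimately show ?thesis by simp
    next
      case False
      then have "Mp = 1" using Mp by simp
      then show ?thesis using B0 N by simp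
    qed
    have "A * N ^ (Mp - 1) + real (Mp - 1) * B * N ^ (Mp - 2) \<le> N ^ Mp * (A / N + real Mp * (B / N^2))"
      using a b unfolding distrib_left by linarith
    then show ?thesis by (intro mult_left_mono) auto
  qed
  also have "\<dots> = real (card Cs) * (real Mp * (A / N + real Mp * (B / N^2)))"
    using cardCs by simp
  finally obtain c where c: "c \<in> Cs" "err c \<le> real Mp * (A / N + real Mp * (B / N^2))"
    using exists_le_avg[OF fCs neCs] by blast
  then have "(1 / real Mp) * err c \<le> A / N + real Mp * (B / N^2)"
    using Mp by (simp add: field_simps)
  then show ?thesis using c unfolding err_def Cs_def A_def B_def N_def by (auto simp: field_simps)
qed



definition Xs :: "nat \<Rightarrow> (nat \<Rightarrow> bool) set" where
  "Xs n = {..<n} \<rightarrow>\<^sub>E (UNIV :: bool set)"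

definition Qc :: "nat \<Rightarrow> (nat \<Rightarrow> real) \<Rightarrow> (nat \<Rightarrow> bool) \<Rightarrow> real" where
  "Qc K p y = (chan K p False y + chan K p True y) / 2"

lemma finite_Xs: "finite (Xs n)" unfolding Xs_def by (intro finite_PiE) auto
lemma card_Xs: "card (Xs n) = 2 ^ n" unfolding Xs_def by (simp add: card_PiE card_UNIV_bool)
lemma Xs_ne: "Xs n \<noteq> {}" unfolding Xs_def by (simp add: PiE_eq_empty_iff)
lemma finite_outs_n: "finite (outs_n K n)"
  unfolding outs_n_def using finite_outs by (intro finite_PiE) auto

lemma chan_n_nonneg:
  assumes "\<forall>i\<in>{1..K}. 0 \<le> p i \<and> p i \<le> 1"
  shows "chan_n K p n x y \<ge> 0"
  unfolding chan_n_def using chan_nonneg[OF assms] by (intro prod_nonneg) auto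

lemma chan_n_sum_x:
  "(\<Sum>x\<in>Xs n. chan_n K p n x y) = (\<Prod>t<n. 2 * Qc K p (y t))"
proof -
  have "(\<Sum>x\<in>Xs n. chan_n K p n x y) =
        (\<Sum>x\<in>PiE {..<n} (\<lambda>_. UNIV). \<Prod>t\<in>{..<n}. (\<lambda>t u. chan K p u (y t)) t (x t))"
    unfolding Xs_def chan_n_def by simp
  also have "\<dots> = (\<Prod>t\<in>{..<n}. \<Sum>u\<in>UNIV. (\<lambda>t u. chan K p u (y t)) t u)"
    by (rule prod_sum_PiE[symmetric]) auto
  also have "\<dots> = (\<Prod>t<n. 2 * Qc K p (y t))"
    by (intro prod.cong refl) (simp add: UNIV_bool Qc_def)
  finally show ?thesis .
qed

lemma chan_n_sum_y:
  "(\<Sum>y\<in>outs_n K n. chan_n K p n x y) = 1"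
proof -
  have "(\<Sum>y\<in>outs_n K n. chan_n K p n x y) =
        (\<Sum>y\<in>PiE {..<n} (\<lambda>_. outs K). \<Prod>t\<in>{..<n}. (\<lambda>t y1. chan K p (x t) y1) t (y t))"
    unfolding outs_n_def chan_n_def by simp
  also have "\<dots> = (\<Prod>t\<in>{..<n}. \<Sum>y1\<in>outs K. (\<lambda>t y1. chan K p (x t) y1) t y1)"
    by (rule prod_sum_PiE[symmetric]) (auto simp: finite_outs)
  also have "\<dots> = 1" by (simp add: chan_sum)
  finally show ?thesis .
qed

definition hfun :: "nat \<Rightarrow> (nat \<Rightarrow> real) \<Rightarrow> real \<Rightarrow> real \<Rightarrow> bool \<Rightarrow> (nat \<Rightarrow> bool) \<Rightarrow> real" where
  "hfun K p c0 s u y = chan K p u y * exp (s * ln (c0 * Qc K p y / chan K p u y))"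

definition gfun :: "nat \<Rightarrow> (nat \<Rightarrow> real) \<Rightarrow> real \<Rightarrow> real \<Rightarrow> real" where
  "gfun K p c0 s = (1/2) * (\<Sum>u\<in>UNIV. \<Sum>y\<in>outs K. hfun K p c0 s u y)"

lemma sum_prod_h:
  "(\<Sum>x\<in>Xs n. \<Sum>y\<in>outs_n K n. \<Prod>t<n. hfun K p c0 s (x t) (y t)) = (2 * gfun K p c0 s) ^ n"
proof -
  have "(\<Sum>x\<in>Xs n. \<Sum>y\<in>outs_n K n. \<Prod>t<n. hfun K p c0 s (x t) (y t)) =
        (\<Sum>x\<in>Xs n. \<Prod>t<n. \<Sum>y1\<in>outs K. hfun K p c0 s (x t) y1)"
  proof (intro sum.cong refl)
    fix x
    show "(\<Sum>y\<in>outs_n K n. \<Prod>t<n. hfun K p c0 s (x t) (y t)) = (\<Prod>t<n. \<Sum>y1\<in>outs K. hfun K p c0 s (x t) y1)"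
      unfolding outs_n_def
      using prod_sum_PiE[of "{..<n}" "\<lambda>_. outs K" "\<lambda>t y1. hfun K p c0 s (x t) y1"]
      by (simp add: finite_outs)
  qed
  also have "\<dots> = (\<Prod>t<n. \<Sum>u\<in>UNIV. \<Sum>y1\<in>outs K. hfun K p c0 s u y1)"
    unfolding Xs_def
    using prod_sum_PiE[of "{..<n}" "\<lambda>_. UNIV" "\<lambda>t u. \<Sum>y1\<in>outs K. hfun K p c0 s u y1"]
    by simp
  also have "\<dots> = (2 * gfun K p c0 s) ^ n" by (simp add: gfun_def)
  finally show ?thesis .
qed

lemma Qc_pos:
  assumes "\<forall>i\<in>{1..K}. 0 \<le> p i \<and> p i \<le> 1" "chan K p u y > 0"
  shows "Qc K p y > 0"
proof -
  have "chan K p False y \<ge> 0" "chan K p True y \<ge> 0" using chan_nonneg[OF assms(1)] by auto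
  then show ?thesis using assms(2) unfolding Qc_def by (cases u) auto
qed

lemma pointwise_A:
  assumes p: "\<forall>i\<in>{1..K}. 0 \<le> p i \<and> p i \<le> 1" and c0: "c0 > 0" and s: "s \<ge> 0"
    and le: "chan_n K p n x y \<le> c0 ^ n * ((\<Sum>x'\<in>Xs n. chan_n K p n x' y) / 2^n)"
  shows "chan_n K p n x y \<le> (\<Prod>t<n. hfun K p c0 s (x t) (y t))"
proof (cases "chan_n K p n x y = 0")
  case True
  have "(\<Prod>t<n. hfun K p c0 s (x t) (y t)) \<ge> 0"
    unfolding hfun_def using chan_nonneg[OF p] by (intro prod_nonneg mult_nonneg_nonneg) auto
  then show ?thesis using True by simp
next
  case False
  have pos: "chan K p (x t) (y t) > 0" if "t < n" for t
  proof -
    have "chan K p (x t) (y t) \<noteq> 0" using False that unfolding chan_n_def by auto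
    moreover have "chan K p (x t) (y t) \<ge> 0" using chan_nonneg[OF p] by blast
    ultimately show ?thesis by linarith
  qed
  have Qpos: "Qc K p (y t) > 0" if "t < n" for t using Qc_pos[OF p pos[OF that]] .
  define r where "r t = c0 * Qc K p (y t) / chan K p (x t) (y t)" for t
  have rpos: "r t > 0" if "t < n" for t using pos[OF that] Qpos[OF that] c0 by (simp add: r_def)
  have Wn_pos: "chan_n K p n x y > 0" using False chan_n_nonneg[OF p, of n x y] by linarith
  have prodr: "(\<Prod>t<n. r t) = c0 ^ n * ((\<Sum>x'\<in>Xs n. chan_n K p n x' y) / 2^n) / chan_n K p n x y"
  proof -
    have "(\<Prod>t<n. r t) = (\<Prod>t<n. c0 * Qc K p (y t)) / chan_n K p n x y"
      unfolding r_def chan_n_def by (rule prod_dividef)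
    also have "(\<Prod>t<n. c0 * Qc K p (y t)) = c0 ^ n * ((\<Prod>t<n. 2 * Qc K p (y t)) / 2^n)"
      by (simp add: prod.distrib)
    finally show ?thesis by (simp add: chan_n_sum_x)
  qed
  have ge1: "(\<Prod>t<n. r t) \<ge> 1" unfolding prodr by (subst le_divide_eq_1_pos[OF Wn_pos]) (rule le)
  have "(\<Prod>t<n. hfun K p c0 s (x t) (y t)) = (\<Prod>t<n. chan K p (x t) (y t) * exp (s * ln (r t)))"
    by (simp add: hfun_def r_def)
  also have "\<dots> = chan_n K p n x y * exp (\<Sum>t<n. s * ln (r t))"
    by (simp add: prod.distrib chan_n_def exp_sum)
  also have "(\<Sum>t<n. s * ln (r t)) = s * ln (\<Prod>t<n. r t)"
  proof -
    have "ln (\<Prod>t<n. r t) = (\<Sum>t<n. ln (r t))" by (rule ln_prod) (auto dest!: rpos)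
    then show ?thesis by (simp add: sum_distrib_left)
  qed
  finally have eq: "(\<Prod>t<n. hfun K p c0 s (x t) (y t)) = chan_n K p n x y * exp (s * ln (\<Prod>t<n. r t))" .
  have "exp (s * ln (\<Prod>t<n. r t)) \<ge> 1"
    using ge1 s by (simp add: mult_nonneg_nonneg)
  then show ?thesis unfolding eq using Wn_pos by simp
qed

lemma boundA:
  assumes p: "\<forall>i\<in>{1..K}. 0 \<le> p i \<and> p i \<le> 1" and c0: "c0 > 0" and s: "s \<ge> 0"
  shows "(1 / real (card (Xs n))) * (\<Sum>x\<in>Xs n. \<Sum>y\<in>outs_n K n.
            if chan_n K p n x y > c0 ^ n * ((\<Sum>x'\<in>Xs n. chan_n K p n x' y) / 2^n) then 0 else chan_n K p n x y)
         \<le> gfun K p c0 s ^ n"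
proof -
  have "(\<Sum>x\<in>Xs n. \<Sum>y\<in>outs_n K n.
            if chan_n K p n x y > c0 ^ n * ((\<Sum>x'\<in>Xs n. chan_n K p n x' y) / 2^n) then 0 else chan_n K p n x y)
        \<le> (\<Sum>x\<in>Xs n. \<Sum>y\<in>outs_n K n. \<Prod>t<n. hfun K p c0 s (x t) (y t))"
  proof (intro sum_mono)
    fix x y
    have h0: "(\<Prod>t<n. hfun K p c0 s (x t) (y t)) \<ge> 0"
      unfolding hfun_def using chan_nonneg[OF p] by (intro prod_nonneg mult_nonneg_nonneg) auto
    show "(if chan_n K p n x y > c0 ^ n * ((\<Sum>x'\<in>Xs n. chan_n K p n x' y) / 2^n) then 0 else chan_n K p n x y)
          \<le> (\<Prod>t<n. hfun K p c0 s (x t) (y t))"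
      using pointwise_A[OF p c0 s, of n x y] h0 by auto
  qed
  also have "\<dots> = (2 * gfun K p c0 s) ^ n" by (rule sum_prod_h)
  finally show ?thesis by (simp add: card_Xs power_mult_distrib divide_le_eq mult.commute)
qed

lemma boundB:
  assumes p: "\<forall>i\<in>{1..K}. 0 \<le> p i \<and> p i \<le> 1" and g: "gam > 0"
  shows "(1 / real (card (Xs n))^2) * (\<Sum>y\<in>outs_n K n. (\<Sum>x\<in>Xs n. chan_n K p n x y) *
            (\<Sum>x\<in>Xs n. if chan_n K p n x y > gam * ((\<Sum>x'\<in>Xs n. chan_n K p n x' y) / 2^n) then 1 else 0))
         \<le> 1 / gam"
proof -
  define S where "S y = (\<Sum>x'\<in>Xs n. chan_n K p n x' y)" for y
  have "(\<Sum>y\<in>outs_n K n. S y * (\<Sum>x\<in>Xs n. if chan_n K p n x y > gam * (S y / 2^n) then 1 else 0))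
        \<le> (\<Sum>y\<in>outs_n K n. \<Sum>x\<in>Xs n. 2^n * chan_n K p n x y / gam)"
  proof (intro sum_mono)
    fix y
    have "S y * (\<Sum>x\<in>Xs n. if chan_n K p n x y > gam * (S y / 2^n) then 1 else 0) =
          (\<Sum>x\<in>Xs n. if chan_n K p n x y > gam * (S y / 2^n) then S y else 0)"
      by (simp add: sum_distrib_left if_distrib cong: if_cong)
    also have "\<dots> \<le> (\<Sum>x\<in>Xs n. 2^n * chan_n K p n x y / gam)"
    proof (intro sum_mono)
      fix x
      show "(if chan_n K p n x y > gam * (S y / 2^n) then S y else 0) \<le> 2^n * chan_n K p n x y / gam"
        using g chan_n_nonneg[OF p, of n x y] by (auto simp: field_simps)
    qed
    finally show "S y * (\<Sum>x\<in>Xs n. if chan_n K p n x y > gam * (S y / 2^n) then 1 else 0)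
        \<le> (\<Sum>x\<in>Xs n. 2^n * chan_n K p n x y / gam)" .
  qed
  also have "\<dots> = 2^n / gam * (\<Sum>x\<in>Xs n. \<Sum>y\<in>outs_n K n. chan_n K p n x y)"
    by (subst sum.swap) (simp add: sum_distrib_left)
  also have "\<dots> = 2^n / gam * 2^n"
    by (simp add: chan_n_sum_y card_Xs)
  finally have "(\<Sum>y\<in>outs_n K n. S y * (\<Sum>x\<in>Xs n. if chan_n K p n x y > gam * (S y / 2^n) then 1 else 0))
        \<le> 2^n / gam * 2^n" .
  then show ?thesis unfolding S_def[symmetric] using g
    by (simp add: card_Xs divide_le_eq power_mult_distrib field_simps power2_eq_square)
qed



lemma gfun_deriv:
  assumes p: "\<forall>i\<in>{1..K}. 0 \<le> p i \<and> p i \<le> 1" and a: "a < mi (chan K p) (outs K)"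
  shows "\<exists>s>0. gfun K p (2 powr a) s < 1"
proof -
  define c0 where "c0 = (2::real) powr a"
  define L where "L u y = ln (c0 * Qc K p y / chan K p u y)" for u y
  have gf: "gfun K p c0 = (\<lambda>s. (1/2) * (\<Sum>u\<in>UNIV. \<Sum>y\<in>outs K. chan K p u y * exp (s * L u y)))"
    by (simp add: gfun_def hfun_def L_def fun_eq_iff)
  have D: "DERIV (gfun K p c0) 0 :> (1/2) * (\<Sum>u\<in>UNIV. \<Sum>y\<in>outs K. chan K p u y * L u y)"
    unfolding gf by (auto intro!: derivative_eq_intros simp: mult.commute)
  have sumW: "(\<Sum>u\<in>(UNIV::bool set). \<Sum>y\<in>outs K. chan K p u y) = 2"
    by (simp add: chan_sum)
  have g0: "gfun K p c0 0 = 1" unfolding gf using sumW by simp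
  have trm: "(1/2) * (chan K p u y * L u y) =
     (1/2) * a * ln 2 * chan K p u y - ln 2 *
       (if chan K p u y = 0 then 0
        else (1/2) * chan K p u y * log 2 (chan K p u y / ((chan K p False y + chan K p True y) / 2)))"
    for u y
  proof (cases "chan K p u y = 0")
    case True then show ?thesis by simp
  next
    case False
    then have W: "chan K p u y > 0" using chan_nonneg[OF p, of u y] by linarith
    have Q: "Qc K p y > 0" using Qc_pos[OF p W] .
    define lw where "lw = log 2 (chan K p u y / ((chan K p False y + chan K p True y) / 2))"
    have h1: "L u y = a * ln 2 + ln (Qc K p y) - ln (chan K p u y)"
      unfolding L_def c0_def using W Q by (simp add: ln_div ln_mult ln_powr)
    have "lw = (ln (chan K p u y) - ln (Qc K p y)) / ln 2"
      unfolding lw_def using W Q unfolding Qc_def[symmetric] by (simp add: log_def ln_div)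
    then have "ln 2 * lw = ln (chan K p u y) - ln (Qc K p y)" by simp
    then have h: "L u y = a * ln 2 - ln 2 * lw" using h1 by linarith
    show ?thesis unfolding lw_def[symmetric] h using False by (simp add: algebra_simps)
  qed
  have "(1/2) * (\<Sum>u\<in>UNIV. \<Sum>y\<in>outs K. chan K p u y * L u y) =
        (\<Sum>u\<in>UNIV. \<Sum>y\<in>outs K. (1/2) * (chan K p u y * L u y))"
    by (simp add: sum_distrib_left)
  also have "\<dots> = (1/2) * a * ln 2 * (\<Sum>u\<in>(UNIV::bool set). \<Sum>y\<in>outs K. chan K p u y) - ln 2 * mi (chan K p) (outs K)"
    unfolding trm mi_def by (simp add: sum_subtractf sum_distrib_left)
  also have "\<dots> = ln 2 * (a - mi (chan K p) (outs K))"
    using sumW by (simp add: algebra_simps)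
  finally have Dv: "(1/2) * (\<Sum>u\<in>UNIV. \<Sum>y\<in>outs K. chan K p u y * L u y) = ln 2 * (a - mi (chan K p) (outs K))" .
  have neg: "ln 2 * (a - mi (chan K p) (outs K)) < 0" using a by (simp add: mult_pos_neg)
  obtain d where d: "d > 0" "\<forall>h>0. h < d \<longrightarrow> gfun K p c0 0 > gfun K p c0 (0 + h)"
    using DERIV_neg_dec_right[OF D[unfolded Dv] neg] by blast
  have "gfun K p c0 (d/2) < 1" using d g0 by auto
  then show ?thesis using d unfolding c0_def by (intro exI[of _ "d/2"]) auto
qed

lemma gfun_nonneg:
  assumes p: "\<forall>i\<in>{1..K}. 0 \<le> p i \<and> p i \<le> 1"
  shows "gfun K p c0 s \<ge> 0"
  unfolding gfun_def hfun_def using chan_nonneg[OF p]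
  by (intro mult_nonneg_nonneg sum_nonneg) auto



lemma ceil_bounds:
  fixes x :: real assumes "x \<ge> 0"
  shows "real (nat \<lceil>x\<rceil>) \<ge> x" "real (nat \<lceil>x\<rceil>) \<le> x + 1"
proof -
  show "real (nat \<lceil>x\<rceil>) \<ge> x" by (rule real_nat_ceiling_ge)
  have "real (nat \<lceil>x\<rceil>) = of_int \<lceil>x\<rceil>" using assms by simp
  also have "\<dots> \<le> x + 1" by linarith
  finally show "real (nat \<lceil>x\<rceil>) \<le> x + 1" .
qed

lemma achievable:
  assumes p: "\<forall>i\<in>{1..K}. 0 \<le> p i \<and> p i \<le> 1" and R: "R < mi (chan K p) (outs K)"
  shows "achievable_fwd K p R"
  unfolding achievable_fwd_def
proof (intro allI impI)
  fix \<epsilon> :: real and N :: nat assume eps: "\<epsilon> > 0"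
  show "\<exists>n\<ge>N. \<exists>Mp enc dec. n > 0 \<and> Mp \<ge> 1 \<and> log 2 (real Mp) / real n \<ge> R \<and> avg_err K p n Mp enc dec \<le> \<epsilon>"
  proof (cases "R \<le> 0")
    case True
    define n where "n = max N 1"
    have "avg_err K p n 1 (\<lambda>_ _. False) (\<lambda>_. 0) = 0" unfolding avg_err_def by simp
    then have "n \<ge> N \<and> n > 0 \<and> (1::nat) \<ge> 1 \<and> log 2 (real (1::nat)) / real n \<ge> R \<and>
               avg_err K p n 1 (\<lambda>_ _. False) (\<lambda>_. 0) \<le> \<epsilon>"
      using True eps by (simp add: n_def)
    then show ?thesis by blast
  next
    case False
    then have R0: "R > 0" by simp
    define I where "I = mi (chan K p) (outs K)"
    define a where "a = (R + I) / 2"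
    have aR: "R < a" and aI: "a < I" using R by (auto simp: a_def I_def)
    have a0: "a > 0" using R0 aR by simp
    obtain s where s: "s > 0" "gfun K p (2 powr a) s < 1"
      using gfun_deriv[OF p, of a] aI unfolding I_def by blast
    define c0 where "c0 = (2::real) powr a"
    define gs where "gs = gfun K p c0 s"
    have gs: "0 \<le> gs" "gs < 1" using s gfun_nonneg[OF p] by (auto simp: gs_def c0_def)
    have c0: "c0 > 1" unfolding c0_def using powr_less_mono[OF a0, of 2] by simp
    have Rc0: "2 powr R < c0" unfolding c0_def using powr_less_mono[OF aR, of 2] by simp
    have R1: "2 powr R > (0::real)" by simp
    define f where "f n = gs^n + (2 powr R / c0)^n + (1/c0)^n" for n
    have lim: "f \<longlonglongrightarrow> 0"
    proof -
      have "(\<lambda>n. gs^n + (2 powr R / c0)^n + (1/c0)^n) \<longlonglongrightarrow> 0 + 0 + 0"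
        using gs c0 Rc0 R1 by (intro tendsto_add LIMSEQ_power_zero) auto
      then show ?thesis unfolding f_def by simp
    qed
    have "eventually (\<lambda>n. f n < \<epsilon>) sequentially"
      using order_tendstoD(2)[OF lim eps] .
    then obtain N0 where N0: "\<And>n. n \<ge> N0 \<Longrightarrow> f n < \<epsilon>"
      unfolding eventually_sequentially by blast
    define n where "n = max (max N N0) 1"
    have n: "n \<ge> N" "n \<ge> N0" "n > 0" by (auto simp: n_def)
    define Mp where "Mp = nat \<lceil>2 powr (real n * R)\<rceil>"
    have pw: "2 powr (real n * R) = (2 powr R)^n" by (simp add: powr_power)
    have Mp1: "real Mp \<ge> 2 powr (real n * R)" "real Mp \<le> (2 powr R)^n + 1"
      using ceil_bounds[of "2 powr (real n * R)"] unfolding Mp_def pw[symmetric] by auto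
    have Mp_pos: "real Mp > 0" using Mp1(1) by (metis less_le_trans powr_gt_zero zero_neq_numeral)
    then have Mp_ge: "Mp \<ge> 1" by simp
    define G where "G = (\<lambda>x y. chan_n K p n x y > c0^n * ((\<Sum>x'\<in>Xs n. chan_n K p n x' y) / 2^n))"
    have ex: "\<exists>c\<in>PiE {..<Mp} (\<lambda>_. Xs n). (1 / real Mp) * (\<Sum>w<Mp. \<Sum>y\<in>outs_n K n. if decf Mp G c y \<noteq> w then chan_n K p n (c w) y else 0) \<le>
      (1 / real (card (Xs n))) * (\<Sum>x\<in>Xs n. \<Sum>y\<in>outs_n K n. if G x y then 0 else chan_n K p n x y) +
      real Mp * ((1 / real (card (Xs n))^2) * (\<Sum>y\<in>outs_n K n. (\<Sum>x\<in>Xs n. chan_n K p n x y) * (\<Sum>x\<in>Xs n. if G x y then 1 else 0)))"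
      by (rule random_coding[OF finite_Xs Xs_ne finite_outs_n, where V="chan_n K p n" and Mp=Mp and G=G])
         (use Mp_ge in \<open>simp_all add: chan_n_nonneg[OF p]\<close>)
    then obtain c where cerr: "(1 / real Mp) * (\<Sum>w<Mp. \<Sum>y\<in>outs_n K n. if decf Mp G c y \<noteq> w then chan_n K p n (c w) y else 0) \<le>
      (1 / real (card (Xs n))) * (\<Sum>x\<in>Xs n. \<Sum>y\<in>outs_n K n. if G x y then 0 else chan_n K p n x y) +
      real Mp * ((1 / real (card (Xs n))^2) * (\<Sum>y\<in>outs_n K n. (\<Sum>x\<in>Xs n. chan_n K p n x y) * (\<Sum>x\<in>Xs n. if G x y then 1 else 0)))"
      by blast
    have A: "(1 / real (card (Xs n))) * (\<Sum>x\<in>Xs n. \<Sum>y\<in>outs_n K n. if G x y then 0 else chan_n K p n x y) \<le> gs ^ n"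
      unfolding G_def gs_def using boundA[OF p _ , of c0 s n] c0 s by simp
    have B: "(1 / real (card (Xs n))^2) * (\<Sum>y\<in>outs_n K n. (\<Sum>x\<in>Xs n. chan_n K p n x y) * (\<Sum>x\<in>Xs n. if G x y then 1 else 0))
             \<le> 1 / c0^n"
      unfolding G_def using boundB[OF p, of "c0^n" n] c0 by simp
    have "real Mp * (1 / c0^n) \<le> ((2 powr R)^n + 1) * (1 / c0^n)"
      using Mp1 c0 by (intro mult_right_mono) auto
    also have "\<dots> = (2 powr R / c0)^n + (1/c0)^n"
      by (simp add: power_divide add_divide_distrib)
    finally have MB: "real Mp * (1 / c0^n) \<le> (2 powr R / c0)^n + (1/c0)^n" .
    have err: "avg_err K p n Mp c (decf Mp G c) \<le> \<epsilon>"
    proof -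
      have "avg_err K p n Mp c (decf Mp G c) \<le> gs ^ n + real Mp * (1 / c0^n)"
        unfolding avg_err_def
        by (rule order_trans[OF cerr add_mono[OF A mult_left_mono[OF B]]]) (use Mp_pos in simp)
      also have "\<dots> \<le> f n" using MB unfolding f_def by simp
      also have "\<dots> < \<epsilon>" using N0 n by simp
      finally show ?thesis by simp
    qed
    have rate: "log 2 (real Mp) / real n \<ge> R"
    proof -
      have "log 2 (real Mp) \<ge> log 2 (2 powr (real n * R))"
        using Mp1 Mp_pos by (subst log_le_cancel_iff) auto
      then have "log 2 (real Mp) \<ge> real n * R" by simp
      then show ?thesis using n by (simp add: le_divide_eq mult.commute)
    qed
    show ?thesis using n rate err Mp_ge by blast
  qed
qed



theorem corollary2:
  fixes K :: nat and ps pd :: "nat \<Rightarrow> real" and \<M> :: "nat set"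
  assumes ps_range: "\<forall>i\<in>{1..K}. 0 \<le> ps i \<and> ps i \<le> 1/2"
      and pd_range: "\<forall>i\<in>{1..K}. 0 \<le> pd i \<and> pd i \<le> 1/2"
      and M_sub: "\<M> \<subseteq> {1..K}" and M_ne: "\<M> \<noteq> {}"
  shows "let p = eff_p ps pd; M = card \<M>;
             pmax = Max (p ` \<M>); qmax = 1 - pmax;
             Rcf = mutual_info_unif K p
         in (\<forall>R. R < Rcf \<longrightarrow> achievable_fwd K p R) \<and>
            Rcf \<ge> 1 + real M * xlogx pmax + real M * xlogx qmax
              - (\<Sum>l=0..M-1. real ((M-1) choose l) *
                   xlogx (qmax ^ l * pmax ^ (M-l) + qmax ^ (M-l) * pmax ^ l))"
proof -
  define p where "p = eff_p ps pd"
  have prange: "\<forall>i\<in>{1..K}. 0 \<le> p i \<and> p i \<le> 1/2"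
  proof
    fix i assume i: "i \<in> {1..K}"
    have "0 \<le> ps i" "ps i \<le> 1/2" "0 \<le> pd i" "pd i \<le> 1/2" using ps_range pd_range i by auto
    then show "0 \<le> p i \<and> p i \<le> 1/2" unfolding p_def eff_p_def by (rule eff_p_range)
  qed
  have p01: "\<forall>i\<in>{1..K}. 0 \<le> p i \<and> p i \<le> 1" using prange by auto
  have fM: "finite \<M>" using M_sub finite_subset by auto
  obtain n where cM: "card \<M> = Suc n" using fM M_ne by (metis card_0_eq not0_implies_Suc)
  define pmax where "pmax = Max (p ` \<M>)"
  have pmax_in: "pmax \<in> p ` \<M>" unfolding pmax_def using fM M_ne by (intro Max_in) auto
  have pmax_ge: "\<And>i. i \<in> \<M> \<Longrightarrow> p i \<le> pmax" unfolding pmax_def using fM by (intro Max_ge) auto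
  have pmax_r: "0 \<le> pmax" "pmax \<le> 1/2" using pmax_in prange M_sub by auto
  have ach: "\<forall>R. R < mutual_info_unif K p \<longrightarrow> achievable_fwd K p R"
    using achievable[OF p01] unfolding mutual_info_mi by blast
  have "mi (chan K (\<lambda>i. if i \<in> \<M> then pmax else 1/2)) (outs K) \<le> mi (chan K p) (outs K)"
    using prange pmax_ge pmax_r by (intro degrade) auto
  moreover have "mi (chan K (\<lambda>i. if i \<in> \<M> then pmax else 1/2)) (outs K) =
     1 + real (Suc n) * xlogx pmax + real (Suc n) * xlogx (1-pmax)
       - (\<Sum>l=0..n. real (n choose l) *
                 xlogx ((1-pmax)^l * pmax^(Suc n-l) + (1-pmax)^(Suc n-l) * pmax^l))"
    using pmax_r by (intro mi_pprime[OF M_sub cM]) auto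
  ultimately have bound: "mutual_info_unif K p \<ge> 1 + real (Suc n) * xlogx pmax + real (Suc n) * xlogx (1-pmax)
       - (\<Sum>l=0..n. real (n choose l) *
                 xlogx ((1-pmax)^l * pmax^(Suc n-l) + (1-pmax)^(Suc n-l) * pmax^l))"
    unfolding mutual_info_mi by linarith
  show ?thesis
    unfolding Let_def p_def[symmetric] pmax_def[symmetric] cM using ach bound by simp
qed


end
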